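(* For every $\gamma\geq1$ and every $n\in\mathbb{N}^*$, the open Euclidean unit ball $B_n(0,1)\subseteq\mathbb{R}^n$ admits the structure of a Lip-$\gamma$ manifold.
   Context: A Lip-$\gamma$ manifold is an $n$-dimensional topological manifold $M$ with a countable family $(U_i,\phi_i)_{i\in I}$ where $U_i\subseteq M$ is open and $\phi_i:M\to\mathbb{R}^n$ is compactly supported with $\phi_i|_{U_i}$ a homeomorphism onto its image, such that: $(U_i)$ is a precompact locally finite cover of $M$; $\phi_i(U_i)=B_n(0,1)$; there exists $\delta\in(0,1)$ such that the sets $(\phi_i|_{U_i})^{-1}(B_n(0,1-\delta))$ cover $M$; there exists $L>0$ such that each $\phi_j\circ(\phi_i|_{U_i})^{-1}:B_n(0,1)\to\mathbb{R}^n$ is Lip-$\gamma$ (in the sense of Stein: $m$ times differentiable, $m$ the integer with $0<\gamma-m\le1$, with derivatives up to order $m$ bounded and Taylor remainders $R_k(x,y)$ of order $k$ bounded by $L\|x-y\|^{\gamma-k}$) with norm $\leq L$. *)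

theory Defs
  imports "HOL-Analysis.Analysis"
begin

text \<open>The integer m attached to gamma: the unique integer with 0 < gamma - m \<le> 1.\<close>
definition lip_order :: "real \<Rightarrow> nat" where
  "lip_order \<gamma> = nat (\<lceil>\<gamma>\<rceil> - 1)"

text \<open>Lip-gamma in the sense of Stein, with norm at most L, on a set U.
  F k x is the k-th derivative of f at x, viewed as a k-multilinear map acting on
  lists of k vectors.\<close>
definition lip_gamma_on ::
  "real \<Rightarrow> real \<Rightarrow> ('a::euclidean_space) set \<Rightarrow> ('a \<Rightarrow> 'b::real_normed_vector) \<Rightarrow> bool" where
  "lip_gamma_on \<gamma> L U f \<longleftrightarrow>
    (\<exists>F :: nat \<Rightarrow> 'a \<Rightarrow> 'a list \<Rightarrow> 'b.
      (\<forall>x\<in>U. F 0 x [] = f x) \<and>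
      (\<forall>k<lip_order \<gamma>. \<forall>hs. length hs = k \<longrightarrow>
          (\<forall>x\<in>U. ((\<lambda>y. F k y hs) has_derivative (\<lambda>v. F (Suc k) x (hs @ [v]))) (at x within U))) \<and>
      (\<forall>k\<le>lip_order \<gamma>. \<forall>x\<in>U. \<forall>hs. length hs = k \<and> (\<forall>h\<in>set hs. norm h \<le> 1)
          \<longrightarrow> norm (F k x hs) \<le> L) \<and>
      (\<forall>k\<le>lip_order \<gamma>. \<forall>x\<in>U. \<forall>y\<in>U. \<forall>hs. length hs = k \<and> (\<forall>h\<in>set hs. norm h \<le> 1)
          \<longrightarrow> norm (F k y hs
                 - (\<Sum>j\<le>lip_order \<gamma> - k. (1 / fact j) *\<^sub>R F (k + j) x (hs @ replicate j (y - x))))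
              \<le> L * norm (x - y) powr (\<gamma> - real k)))"

definition lip_gamma_manifold ::
  "real \<Rightarrow> 'm topology \<Rightarrow> 'i set \<Rightarrow> ('i \<Rightarrow> 'm set) \<Rightarrow> ('i \<Rightarrow> 'm \<Rightarrow> 'a::euclidean_space) \<Rightarrow> bool" where
  "lip_gamma_manifold \<gamma> X I U \<phi> \<longleftrightarrow>
     Hausdorff_space X \<and> second_countable X \<and>
     countable I \<and>
     (\<forall>i\<in>I. openin X (U i)) \<and>
     (\<forall>i\<in>I. continuous_map X euclidean (\<phi> i)) \<and>
     (\<forall>i\<in>I. \<exists>K. compactin X K \<and> (\<forall>x\<in>topspace X - K. \<phi> i x = 0)) \<and>
     (\<forall>i\<in>I. homeomorphic_map (subtopology X (U i)) (top_of_set (ball 0 1)) (\<phi> i)) \<and>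
     (\<forall>i\<in>I. compactin X (X closure_of (U i))) \<and>
     (\<Union>i\<in>I. U i) = topspace X \<and>
     (\<forall>x\<in>topspace X. \<exists>V. openin X V \<and> x \<in> V \<and> finite {i\<in>I. U i \<inter> V \<noteq> {}}) \<and>
     (\<exists>\<delta>. 0 < \<delta> \<and> \<delta> < 1 \<and>
        topspace X \<subseteq> (\<Union>i\<in>I. {x\<in>U i. \<phi> i x \<in> ball 0 (1 - \<delta>)})) \<and>
     (\<exists>L>0. \<forall>i\<in>I. \<forall>j\<in>I. lip_gamma_on \<gamma> L (ball 0 1) (\<phi> j \<circ> inv_into (U i) (\<phi> i)))"

end

theory Submission
  imports Defs "HOL-Computational_Algebra.Polynomial"
begin


lemma fderiv_Un:
  assumes "(f has_field_derivative D) (at x within S)" "(f has_field_derivative D) (at x within T)"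
  shows "(f has_field_derivative D) (at x within (S \<union> T))"
  using assms unfolding has_field_derivative_iff by (simp add: Lim_within_Un)

lemma fderiv_transform:
  assumes "x \<in> s" "\<And>y. y \<in> s \<Longrightarrow> g y = f y" "(f has_field_derivative D) (at x within s)"
  shows "(g has_field_derivative D) (at x within s)"
  using assms unfolding has_field_derivative_def by (rule has_derivative_transform)

definition clamp :: "real \<Rightarrow> real" where "clamp t = max 0 (min 1 t)"

lemma deriv_clamp:
  assumes d: "\<And>x. (f has_field_derivative f' x) (at x)" and z: "f' 0 = 0" "f' 1 = 0"
  shows "((\<lambda>t. f (clamp t)) has_field_derivative f' (clamp t)) (at t)"
proof -
  consider "t < 0" | "t = 0" | "0 < t \<and> t < 1" | "t = 1" | "t > 1" by linarith
  then show ?thesis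
  proof cases
    case 1
    have e: "f' (clamp t) = 0" using 1 z by (simp add: clamp_def)
    have "((\<lambda>t. f 0) has_field_derivative 0) (at t)" by simp
    then have "((\<lambda>t. f (clamp t)) has_field_derivative 0) (at t)"
    proof (rule has_field_derivative_transform_within_open[where S="{..<0}"])
      show "open {..<(0::real)}" by simp
      show "t \<in> {..<0}" using 1 by simp
      show "\<And>x. x \<in> {..<0} \<Longrightarrow> f 0 = f (clamp x)" by (simp add: clamp_def)
    qed
    then show ?thesis using e by simp
  next
    case 5
    have e: "f' (clamp t) = 0" using 5 z by (simp add: clamp_def)
    have "((\<lambda>t. f 1) has_field_derivative 0) (at t)" by simp
    then have "((\<lambda>t. f (clamp t)) has_field_derivative 0) (at t)"
    proof (rule has_field_derivative_transform_within_open[where S="{1<..}"])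
      show "open {(1::real)<..}" by simp
      show "t \<in> {1<..}" using 5 by simp
      show "\<And>x. x \<in> {1<..} \<Longrightarrow> f 1 = f (clamp x)" by (simp add: clamp_def)
    qed
    then show ?thesis using e by simp
  next
    case 3
    have e: "clamp t = t" using 3 by (simp add: clamp_def)
    have "(f has_field_derivative f' t) (at t)" by (rule d)
    then have "((\<lambda>t. f (clamp t)) has_field_derivative f' t) (at t)"
    proof (rule has_field_derivative_transform_within_open[where S="{0<..<1}"])
      show "open {(0::real)<..<1}" by simp
      show "t \<in> {0<..<1}" using 3 by simp
      show "\<And>x. x \<in> {0<..<1} \<Longrightarrow> f x = f (clamp x)" by (simp add: clamp_def)
    qed
    then show ?thesis using e by simp
  next
    case 2
    have c0: "clamp 0 = 0" by (simp add: clamp_def)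
    have a: "((\<lambda>t. f (clamp t)) has_field_derivative 0) (at 0 within {..0})"
    proof (rule fderiv_transform[where f="\<lambda>t. f 0"])
      show "\<And>y. y \<in> {..0} \<Longrightarrow> f (clamp y) = f 0" by (simp add: clamp_def)
    qed simp_all
    have b: "((\<lambda>t. f (clamp t)) has_field_derivative 0) (at 0 within {0..<1})"
    proof (rule fderiv_transform[where f="f"])
      show "(f has_field_derivative 0) (at 0 within {0..<1})"
        using has_field_derivative_at_within[OF d[of 0]] z by simp
      show "\<And>y. y \<in> {0..<1} \<Longrightarrow> f (clamp y) = f y" by (simp add: clamp_def)
    qed simp
    have u: "{..0} \<union> {0..<1} = {..<(1::real)}" by auto
    have "((\<lambda>t. f (clamp t)) has_field_derivative 0) (at 0 within {..<1})"
      using fderiv_Un[OF a b] unfolding u .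
    moreover have "at (0::real) within {..<1} = at 0" by (rule at_within_open) auto
    ultimately show ?thesis using 2 z c0 by simp
  next
    case 4
    have c1: "clamp 1 = 1" by (simp add: clamp_def)
    have a: "((\<lambda>t. f (clamp t)) has_field_derivative 0) (at 1 within {1..})"
    proof (rule fderiv_transform[where f="\<lambda>t. f 1"])
      show "\<And>y. y \<in> {1..} \<Longrightarrow> f (clamp y) = f 1" by (simp add: clamp_def)
    qed simp_all
    have b: "((\<lambda>t. f (clamp t)) has_field_derivative 0) (at 1 within {0<..1})"
    proof (rule fderiv_transform[where f="f"])
      show "(f has_field_derivative 0) (at 1 within {0<..1})"
        using has_field_derivative_at_within[OF d[of 1]] z by simp
      show "\<And>y. y \<in> {0<..1} \<Longrightarrow> f (clamp y) = f y" by (simp add: clamp_def)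
    qed simp
    have u: "{0<..1} \<union> {1..} = {(0::real)<..}" by auto
    have "((\<lambda>t. f (clamp t)) has_field_derivative 0) (at 1 within {0<..})"
      using fderiv_Un[OF b a] unfolding u .
    moreover have "at (1::real) within {0<..} = at 1" by (rule at_within_open) auto
    ultimately show ?thesis using 4 z c1 by simp
  qed
qed
lemma antideriv_poly: "\<exists>P::real poly. pderiv P = q"
proof
  show "pderiv (\<Sum>i\<le>degree q. monom (coeff q i / real (Suc i)) (Suc i)) = q"
    using higher_pderiv_sum[of 1 "\<lambda>i. monom (coeff q i / real (Suc i)) (Suc i)" "{..degree q}"]
    by (subst (2) poly_as_sum_of_monoms[symmetric]) (simp add: pderiv_monom)
qed

lemma dvd_pderiv:
  fixes q :: "real poly"
  assumes "[:-a,1:] ^ Suc M dvd q" shows "[:-a,1:] ^ M dvd pderiv q"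
proof -
  define p where "p = [:-a,1:]"
  obtain r where r: "q = p ^ Suc M * r" using assms by (auto elim: dvdE simp: p_def)
  have e: "pderiv q = p ^ Suc M * pderiv r + r * (smult (of_nat (Suc M)) (p ^ M) * pderiv p)"
    unfolding r pderiv_mult pderiv_power_Suc ..
  have d1: "p ^ M dvd p ^ Suc M * pderiv r"
    by (rule dvd_mult2) (rule le_imp_power_dvd, simp)
  have d2: "p ^ M dvd r * (smult (of_nat (Suc M)) (p ^ M) * pderiv p)"
    by (rule dvd_mult, rule dvd_mult2, rule dvd_smult) simp
  show ?thesis unfolding e p_def[symmetric] using d1 d2 by (rule dvd_add)
qed

lemma dvd_higher_pderiv:
  fixes q :: "real poly"
  assumes "[:-a,1:] ^ M dvd q" "j \<le> M" shows "[:-a,1:] ^ (M - j) dvd (pderiv ^^ j) q"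
  using assms(2)
proof (induction j)
  case 0 then show ?case using assms by simp
next
  case (Suc j)
  then have "[:-a,1:] ^ Suc (M - Suc j) dvd (pderiv ^^ j) q" using Suc_diff_Suc by fastforce
  then show ?case by (simp add: dvd_pderiv)
qed

lemma higher_pderiv_root:
  fixes q :: "real poly"
  assumes "[:-a,1:] ^ M dvd q" "j < M" shows "poly ((pderiv ^^ j) q) a = 0"
proof -
  have "[:-a,1:] ^ Suc (M - Suc j) dvd (pderiv ^^ j) q"
    using dvd_higher_pderiv[OF assms(1), of j] assms(2) by (simp add: Suc_diff_Suc)
  then have "[:-a,1:] dvd (pderiv ^^ j) q" by (meson dvd_power dvd_trans zero_less_Suc)
  then show ?thesis by (simp add: poly_eq_0_iff_dvd)
qed


lemma poly_clamp_bounded: "\<exists>B. \<forall>t. \<bar>poly p (clamp t)\<bar> \<le> (B::real)"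
proof -
  have "compact (poly p ` {0..1})"
    by (rule compact_continuous_image) (auto intro: continuous_intros)
  then obtain B where B: "\<And>y. y \<in> poly p ` {0..1} \<Longrightarrow> norm y \<le> B"
    using compact_imp_bounded bounded_iff by metis
  have "clamp t \<in> {0..1}" for t by (simp add: clamp_def)
  then show ?thesis using B by (metis image_eqI real_norm_def)
qed

lemma finite_bound:
  assumes "\<And>k. k \<le> (N::nat) \<Longrightarrow> \<exists>B. \<forall>t. \<bar>f k t\<bar> \<le> (B::real)"
  shows "\<exists>B. \<forall>k\<le>N. \<forall>t. \<bar>f k t\<bar> \<le> B"
  using assms
proof (induction N)
  case 0 then show ?case by auto
next
  case (Suc N)
  obtain B1 where B1: "\<forall>k\<le>N. \<forall>t. \<bar>f k t\<bar> \<le> B1" using Suc by auto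
  obtain B2 where B2: "\<forall>t. \<bar>f (Suc N) t\<bar> \<le> B2" using Suc.prems by auto
  show ?case
  proof (intro exI allI impI)
    fix k t assume "k \<le> Suc N"
    then consider "k \<le> N" | "k = Suc N" by linarith
    then show "\<bar>f k t\<bar> \<le> max B1 B2"
    proof cases
      case 1 then show ?thesis using B1 by (meson max.coboundedI1)
    next
      case 2 then show ?thesis using B2 by (simp add: le_max_iff_disj)
    qed
  qed
qed

lemma smooth_step:
  "\<exists>u::nat \<Rightarrow> real \<Rightarrow> real. (\<forall>k<M. \<forall>t. (u k has_real_derivative u (Suc k) t) (at t)) \<and>
     (\<exists>B. \<forall>k\<le>M. \<forall>t. \<bar>u k t\<bar> \<le> B) \<and> (\<forall>t\<le>0. u 0 t = 0) \<and> (\<forall>t\<ge>1. u 0 t = 1) \<and>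
     (\<forall>k t. 1 \<le> k \<and> k \<le> M \<and> (t \<le> 0 \<or> t \<ge> 1) \<longrightarrow> u k t = 0)"
proof -
  define q :: "real poly" where "q = [:0,1:] ^ M * [:-1,1:] ^ M"
  obtain P where P: "pderiv P = q" using antideriv_poly by blast
  have q0: "[:-0,1:] ^ M dvd q" by (simp add: q_def)
  have q1: "[:-1,1:] ^ M dvd q" by (simp add: q_def)
  have "poly P 1 \<noteq> poly P 0"
  proof -
    obtain l z where z: "0 < z" "z < 1" "DERIV (poly P) z :> l" "poly P 1 - poly P 0 = (1 - 0) * l"
    proof -
      have "continuous_on {0..1} (poly P)" by (auto intro: continuous_intros)
      moreover have "\<And>x. poly P differentiable (at x)" using poly_DERIV real_differentiable_def by blast
      ultimately show ?thesis using MVT[of 0 1 "poly P"] that by auto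
    qed
    have "l = poly q z" using DERIV_unique[OF z(3) poly_DERIV[of P z]] P by simp
    moreover have "poly q z \<noteq> 0" using z by (simp add: q_def)
    ultimately show ?thesis using z by simp
  qed
  define c where "c = 1 / (poly P 1 - poly P 0)"
  define S where "S = smult c (P - [:poly P 0:])"
  have S0: "poly S 0 = 0" by (simp add: S_def)
  have S1: "poly S 1 = 1" using \<open>poly P 1 \<noteq> poly P 0\<close> by (simp add: S_def c_def)
  have dS: "(pderiv ^^ Suc j) S = smult c ((pderiv ^^ j) q)" for j
  proof -
    have "pderiv S = smult c q" unfolding S_def pderiv_smult pderiv_diff P pderiv_singleton by simp
    have "(pderiv ^^ Suc j) S = (pderiv ^^ j) (pderiv S)" by (rule funpow_Suc_right[THEN fun_cong, unfolded o_apply])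
    then show ?thesis using \<open>pderiv S = smult c q\<close> higher_pderiv_smult by metis
  qed
  have van: "poly ((pderiv ^^ k) S) a = 0" if k1: "1 \<le> k" and kM: "k \<le> M" and a01: "a = 0 \<or> a = 1" for k a
  proof -
    obtain j where j: "k = Suc j" using k1 by (cases k) simp_all
    have jM: "j < M" using kM j by simp
    have r: "poly ((pderiv ^^ j) q) a = 0"
    proof (cases "a = 0")
      case True then show ?thesis using higher_pderiv_root[OF q0 jM] by simp
    next
      case False then have "a = 1" using a01 by simp
      then show ?thesis using higher_pderiv_root[OF q1 jM] by simp
    qed
    have "poly ((pderiv ^^ k) S) a = c * poly ((pderiv ^^ j) q) a" unfolding j dS by simp
    then show ?thesis using r by simp
  qed
  define u where "u k t = poly ((pderiv ^^ k) S) (clamp t)" for k t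
  have der: "(u k has_real_derivative u (Suc k) t) (at t)" if "k < M" for k t
  proof -
    have "((\<lambda>t. poly ((pderiv ^^ k) S) (clamp t)) has_real_derivative poly ((pderiv ^^ Suc k) S) (clamp t)) (at t)"
    proof (rule deriv_clamp)
      show "(poly ((pderiv ^^ k) S) has_real_derivative poly ((pderiv ^^ Suc k) S) x) (at x)" for x
        using poly_DERIV[of "(pderiv ^^ k) S" x] by simp
      show "poly ((pderiv ^^ Suc k) S) 0 = 0" by (rule van) (use that in simp_all)
      show "poly ((pderiv ^^ Suc k) S) 1 = 0" by (rule van) (use that in simp_all)
    qed
    then show ?thesis unfolding u_def .
  qed
  have bnd: "\<exists>B. \<forall>k\<le>M. \<forall>t. \<bar>u k t\<bar> \<le> B"
    by (rule finite_bound) (unfold u_def, rule poly_clamp_bounded)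
  have "u 0 t = 0" if "t \<le> 0" for t using that S0 by (simp add: u_def clamp_def)
  moreover have "u 0 t = 1" if "t \<ge> 1" for t using that S1 by (simp add: u_def clamp_def)
  moreover have "u k t = 0" if "1 \<le> k" "k \<le> M" "t \<le> 0 \<or> t \<ge> 1" for k t
  proof -
    have "clamp t = 0 \<or> clamp t = 1" using that(3) by (auto simp: clamp_def)
    then show ?thesis unfolding u_def using van[OF that(1,2)] by blast
  qed
  ultimately show ?thesis using der bnd by blast
qed



definition nice :: "nat \<Rightarrow> (real^'n \<Rightarrow> real) \<Rightarrow> bool" where
  "nice N f \<longleftrightarrow> (\<exists>G. (\<forall>x. G x [] = f x) \<and>
     (\<forall>hs x. length hs < N \<longrightarrow> ((\<lambda>y. G y hs) has_derivative (\<lambda>v. G x (hs @ [v]))) (at x)) \<and>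
     (\<exists>B. \<forall>hs x. length hs \<le> N \<longrightarrow> \<bar>G x hs\<bar> \<le> B * prod_list (map norm hs)))"

lemma prod_list_norm_nonneg: "0 \<le> prod_list (map norm (hs :: ('a::real_normed_vector) list))"
  by (induction hs) auto

lemma nice_const: "nice N (\<lambda>x. c)"
  unfolding nice_def
proof (rule exI[where x="\<lambda>(x::real^'n) hs. if hs = [] then c else 0"], intro exI conjI allI impI)
  let ?G = "\<lambda>(x::real^'n) hs. if hs = [] then c else 0"
  show "?G x [] = c" for x by simp
  show "((\<lambda>y. ?G y hs) has_derivative (\<lambda>v. ?G x (hs @ [v]))) (at x)" for hs x
    by (cases "hs = []") simp_all
  show "\<bar>?G x hs\<bar> \<le> \<bar>c\<bar> * prod_list (map norm hs)" for x hs
    by (cases "hs = []") (simp_all add: prod_list_norm_nonneg)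
qed

lemma nice_ridge:
  fixes s :: "nat \<Rightarrow> real \<Rightarrow> real"
  assumes d: "\<And>k t. k < N \<Longrightarrow> (s k has_real_derivative s (Suc k) t) (at t)"
    and b: "\<And>k t. k \<le> N \<Longrightarrow> \<bar>s k t\<bar> \<le> B"
  shows "nice N (\<lambda>x::real^'n. s 0 (a * x$l + c))"
proof -
  define G where "G = (\<lambda>(x::real^'n) hs. a ^ length hs * s (length hs) (a * x$l + c) * prod_list (map (\<lambda>h. h$l) hs))"
  show ?thesis unfolding nice_def
proof (rule exI[where x=G], intro exI conjI allI impI)
  show "G x [] = s 0 (a * x$l + c)" for x by (simp add: G_def)
  show "((\<lambda>y. G y hs) has_derivative (\<lambda>v. G x (hs @ [v]))) (at x)" if "length hs < N" for hs x
  proof -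
    have vn: "((\<lambda>y::real^'n. y$l) has_derivative (\<lambda>v. v$l)) (at x)"
      using bounded_linear_imp_has_derivative[OF bounded_linear_vec_nth] .
    have lin: "((\<lambda>y::real^'n. a * y$l + c) has_derivative (\<lambda>v. a * v$l)) (at x)"
      using has_derivative_add_const[OF has_derivative_mult_right[OF vn]] .
    have "((\<lambda>y. s (length hs) (a * y$l + c)) has_derivative (\<lambda>v. a * v$l * s (Suc (length hs)) (a * x$l + c))) (at x)"
      by (rule DERIV_compose_FDERIV[OF d[OF that] lin])
    then have "((\<lambda>y. a ^ length hs * s (length hs) (a * y$l + c) * prod_list (map (\<lambda>h. h$l) hs)) has_derivative
        (\<lambda>v. a ^ length hs * (a * v$l * s (Suc (length hs)) (a * x$l + c)) * prod_list (map (\<lambda>h. h$l) hs))) (at x)"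
      by (intro derivative_intros)
    moreover have "(\<lambda>v. a ^ length hs * (a * v$l * s (Suc (length hs)) (a * x$l + c)) * prod_list (map (\<lambda>h. h$l) hs))
       = (\<lambda>v. G x (hs @ [v]))"
      by (rule ext) (simp add: G_def algebra_simps)
    ultimately show ?thesis unfolding G_def by simp
  qed
  show "\<bar>G x hs\<bar> \<le> (max 1 \<bar>a\<bar> ^ N * B) * prod_list (map norm hs)" if "length hs \<le> N" for x hs
  proof -
    have B0: "0 \<le> B" using b[of 0 0] by simp
    have p: "\<bar>prod_list (map (\<lambda>h. h$l) hs)\<bar> \<le> prod_list (map norm hs)"
    proof (induction hs)
      case (Cons h hs) then show ?case
        by (simp add: abs_mult mult_mono' component_le_norm_cart)
    qed simp
    have "\<bar>a\<bar> ^ length hs \<le> max 1 \<bar>a\<bar> ^ length hs" by (simp add: power_mono)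
    also have "\<dots> \<le> max 1 \<bar>a\<bar> ^ N" by (rule power_increasing[OF that]) simp
    finally have aa: "\<bar>a\<bar> ^ length hs \<le> max 1 \<bar>a\<bar> ^ N" .
    have "\<bar>G x hs\<bar> = \<bar>a\<bar> ^ length hs * \<bar>s (length hs) (a * x$l + c)\<bar> * \<bar>prod_list (map (\<lambda>h. h$l) hs)\<bar>"
      by (simp add: G_def abs_mult power_abs)
    also have "\<dots> \<le> max 1 \<bar>a\<bar> ^ N * B * prod_list (map norm hs)"
      by (intro mult_mono aa b that p) (simp_all add: B0)
    finally show ?thesis .
  qed
qed
qed


lemma nths_cong_len: "(\<And>i. i < length xs \<Longrightarrow> i \<in> A \<longleftrightarrow> i \<in> B) \<Longrightarrow> nths xs A = nths xs B"
proof (induction xs arbitrary: A B)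
  case Nil then show ?case by simp
next
  case (Cons x xs)
  have "nths xs {j. Suc j \<in> A} = nths xs {j. Suc j \<in> B}"
    by (rule Cons.IH) (use Cons.prems in auto)
  moreover have "0 \<in> A \<longleftrightarrow> 0 \<in> B" using Cons.prems[of 0] by simp
  ultimately show ?case by (simp add: nths_Cons)
qed

lemma prod_nths_split:
  fixes f :: "'a \<Rightarrow> 'b::comm_monoid_mult"
  shows "prod_list (map f (nths xs A)) * prod_list (map f (nths xs (-A))) = prod_list (map f xs)"
proof (induction xs arbitrary: A)
  case Nil then show ?case by simp
next
  case (Cons x xs)
  have IH: "prod_list (map f (nths xs {j. Suc j \<in> A})) * prod_list (map f (nths xs {j. Suc j \<notin> A})) = prod_list (map f xs)"
    using Cons.IH[of "{j. Suc j \<in> A}"] by (simp add: Compl_eq)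
  show ?case
    by (simp add: nths_Cons IH[symmetric] mult_ac)
qed

lemma length_nths_le: "length (nths xs I) \<le> length xs"
proof (induction xs arbitrary: I)
  case (Cons x xs)
  have "length (nths xs {j. Suc j \<in> I}) \<le> length xs" by (rule Cons.IH)
  then show ?case by (simp add: nths_Cons)
qed simp

lemma nice_bound_nonneg:
  assumes "\<forall>hs x. length hs \<le> N \<longrightarrow> \<bar>G x hs\<bar> \<le> B * prod_list (map norm hs)"
  shows "0 \<le> (B::real)"
  using assms[rule_format, of "[]" undefined] by simp

lemma pow_split: "Pow {0..<Suc n} = Pow {0..<n} \<union> insert n ` Pow {0..<n}"
  by (simp add: atLeast0_lessThan_Suc Pow_insert)

lemma nice_mult:
  assumes f: "nice N f" and g: "nice N g"
  shows "nice N (\<lambda>x. f x * g x)"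
proof -
  obtain G1 B1 where G1: "\<forall>x. G1 x [] = f x"
    "\<forall>hs x. length hs < N \<longrightarrow> ((\<lambda>y. G1 y hs) has_derivative (\<lambda>v. G1 x (hs @ [v]))) (at x)"
    "\<forall>hs x. length hs \<le> N \<longrightarrow> \<bar>G1 x hs\<bar> \<le> B1 * prod_list (map norm hs)"
    using f unfolding nice_def by blast
  obtain G2 B2 where G2: "\<forall>x. G2 x [] = g x"
    "\<forall>hs x. length hs < N \<longrightarrow> ((\<lambda>y. G2 y hs) has_derivative (\<lambda>v. G2 x (hs @ [v]))) (at x)"
    "\<forall>hs x. length hs \<le> N \<longrightarrow> \<bar>G2 x hs\<bar> \<le> B2 * prod_list (map norm hs)"
    using g unfolding nice_def by blast
  have B10: "0 \<le> B1" by (rule nice_bound_nonneg[OF G1(3)])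
  have B20: "0 \<le> B2" by (rule nice_bound_nonneg[OF G2(3)])
  define G where "G x hs = (\<Sum>S\<in>Pow {0..<length hs}. G1 x (nths hs S) * G2 x (nths hs (-S)))" for x hs
  show ?thesis unfolding nice_def
  proof (rule exI[where x=G], intro exI conjI allI impI)
    show "G x [] = f x * g x" for x by (simp add: G_def G1(1) G2(1))
  next
    fix hs :: "(real^'a) list" and x assume len: "length hs < N"
    define n where "n = length hs"
    let ?T = "\<lambda>v S. G1 x (nths hs S) * G2 x (nths hs (-S) @ [v]) + G1 x (nths hs S @ [v]) * G2 x (nths hs (-S))"
    have "((\<lambda>y. G y hs) has_derivative (\<lambda>v. \<Sum>S\<in>Pow {0..<n}. ?T v S)) (at x)"
      unfolding G_def n_def
    proof (rule has_derivative_sum)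
      fix S assume "S \<in> Pow {0..<length hs}"
      have l1: "length (nths hs S) < N" using len length_nths_le[of hs S] by linarith
      have l2: "length (nths hs (-S)) < N" using len length_nths_le[of hs "-S"] by linarith
      show "((\<lambda>y. G1 y (nths hs S) * G2 y (nths hs (-S))) has_derivative (\<lambda>v. ?T v S)) (at x)"
        using has_derivative_mult[OF G1(2)[rule_format, OF l1] G2(2)[rule_format, OF l2]] .
    qed
    moreover have "(\<lambda>v. \<Sum>S\<in>Pow {0..<n}. ?T v S) = (\<lambda>v. G x (hs @ [v]))"
    proof (rule ext)
      fix v
      let ?U = "\<lambda>S'. G1 x (nths (hs @ [v]) S') * G2 x (nths (hs @ [v]) (-S'))"
      have a: "?U S = G1 x (nths hs S) * G2 x (nths hs (-S) @ [v])" if "S \<in> Pow {0..<n}" for S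
      proof -
        have "n \<notin> S" using that by auto
        then show ?thesis by (simp add: nths_append n_def)
      qed
      have b: "?U (insert n S) = G1 x (nths hs S @ [v]) * G2 x (nths hs (-S))" if "S \<in> Pow {0..<n}" for S
      proof -
        have e1: "nths hs (insert n S) = nths hs S" by (rule nths_cong_len) (auto simp: n_def)
        have e2: "nths hs (- insert n S) = nths hs (-S)" by (rule nths_cong_len) (auto simp: n_def)
        show ?thesis by (simp add: nths_append n_def[symmetric] e1 e2)
      qed
      have inj: "inj_on (insert n) (Pow {0..<n})"
        by (rule inj_onI) (metis Pow_iff atLeastLessThan_iff insert_ident less_irrefl subsetD)
      have "G x (hs @ [v]) = (\<Sum>S'\<in>Pow {0..<Suc n}. ?U S')" by (simp add: G_def n_def)
      also have "\<dots> = (\<Sum>S'\<in>Pow {0..<n}. ?U S') + (\<Sum>S'\<in>insert n ` Pow {0..<n}. ?U S')"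
        unfolding pow_split by (rule sum.union_disjoint) auto
      also have "(\<Sum>S'\<in>insert n ` Pow {0..<n}. ?U S') = (\<Sum>S\<in>Pow {0..<n}. ?U (insert n S))"
        by (rule sum.reindex[OF inj, unfolded o_def])
      also have "(\<Sum>S'\<in>Pow {0..<n}. ?U S') + (\<Sum>S\<in>Pow {0..<n}. ?U (insert n S)) = (\<Sum>S\<in>Pow {0..<n}. ?T v S)"
        by (simp add: a b sum.distrib)
      finally show "(\<Sum>S\<in>Pow {0..<n}. ?T v S) = G x (hs @ [v])" by simp
    qed
    ultimately show "((\<lambda>y. G y hs) has_derivative (\<lambda>v. G x (hs @ [v]))) (at x)" by simp
  next
    fix hs :: "(real^'a) list" and x assume len: "length hs \<le> N"
    have "\<bar>G x hs\<bar> \<le> (\<Sum>S\<in>Pow {0..<length hs}. \<bar>G1 x (nths hs S) * G2 x (nths hs (-S))\<bar>)"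
      unfolding G_def by (rule sum_abs)
    also have "\<dots> \<le> (\<Sum>S\<in>Pow {0..<length hs}. B1 * B2 * prod_list (map norm hs))"
    proof (rule sum_mono)
      fix S assume "S \<in> Pow {0..<length hs}"
      have l1: "length (nths hs S) \<le> N" using len length_nths_le[of hs S] by linarith
      have l2: "length (nths hs (-S)) \<le> N" using len length_nths_le[of hs "-S"] by linarith
      have "\<bar>G1 x (nths hs S) * G2 x (nths hs (-S))\<bar>
          \<le> (B1 * prod_list (map norm (nths hs S))) * (B2 * prod_list (map norm (nths hs (-S))))"
        unfolding abs_mult
        by (intro mult_mono G1(3)[rule_format, OF l1] G2(3)[rule_format, OF l2])
           (simp_all add: B10 prod_list_norm_nonneg)
      also have "\<dots> = B1 * B2 * prod_list (map norm hs)"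
        using prod_nths_split[of norm hs S] by (simp add: mult_ac)
      finally show "\<bar>G1 x (nths hs S) * G2 x (nths hs (-S))\<bar> \<le> B1 * B2 * prod_list (map norm hs)" .
    qed
    also have "\<dots> = 2 ^ length hs * (B1 * B2 * prod_list (map norm hs))"
      by (simp add: card_Pow)
    also have "\<dots> \<le> 2 ^ N * (B1 * B2 * prod_list (map norm hs))"
      by (intro mult_right_mono power_increasing len) (simp_all add: B10 B20 prod_list_norm_nonneg)
    finally show "\<bar>G x hs\<bar> \<le> (2 ^ N * B1 * B2) * prod_list (map norm hs)" by (simp add: mult_ac)
  qed
qed

lemma nice_prod:
  assumes "finite I" "\<And>i. i \<in> I \<Longrightarrow> nice N (f i)"
  shows "nice N (\<lambda>x. \<Prod>i\<in>I. f i x)"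
  using assms
proof (induction I rule: finite_induct)
  case empty then show ?case by (simp add: nice_const)
next
  case (insert i I)
  have "nice N (\<lambda>x. f i x * (\<Prod>i\<in>I. f i x))"
    by (rule nice_mult) (use insert in auto)
  then show ?case using insert by simp
qed



lemma bump_exists:
  "\<exists>bk :: nat \<Rightarrow> real \<Rightarrow> real. (\<forall>k<N. \<forall>t. (bk k has_real_derivative bk (Suc k) t) (at t)) \<and>
     (\<exists>B. \<forall>k\<le>N. \<forall>t. \<bar>bk k t\<bar> \<le> B) \<and> (\<forall>k\<le>N. \<forall>t. \<bar>t\<bar> \<ge> 2 \<longrightarrow> bk k t = 0) \<and>
     (\<forall>t. \<bar>t\<bar> \<le> 1 \<longrightarrow> bk 0 t = 1)"
proof -
  obtain u B where d: "\<forall>k<N. \<forall>t. (u k has_real_derivative u (Suc k) t) (at t)"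
    and B: "\<forall>k\<le>N. \<forall>t. \<bar>u k t\<bar> \<le> B" and u0: "\<forall>t\<le>0. u 0 t = 0" and u1: "\<forall>t\<ge>1. u 0 t = 1"
    and uk: "\<forall>k t. 1 \<le> k \<and> k \<le> N \<and> (t \<le> 0 \<or> t \<ge> 1) \<longrightarrow> u k t = 0"
    using smooth_step[of N] by blast
  define bk where "bk k t = u k (t + 2) + (-1) ^ k * u k (2 - t) - (if k = 0 then 1 else 0)" for k t
  have "(bk k has_real_derivative bk (Suc k) t) (at t)" if "k < N" for k t
  proof -
    have d1: "((\<lambda>t. u k (t + 2)) has_real_derivative u (Suc k) (t + 2) * 1) (at t)"
      by (rule DERIV_chain2[OF d[rule_format, OF that]]) (auto intro!: derivative_eq_intros)
    have d2: "((\<lambda>t. u k (2 - t)) has_real_derivative u (Suc k) (2 - t) * (-1)) (at t)"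
      by (rule DERIV_chain2[OF d[rule_format, OF that]]) (auto intro!: derivative_eq_intros)
    have "(bk k has_real_derivative u (Suc k) (t + 2) * 1 + (-1) ^ k * (u (Suc k) (2 - t) * (-1)) - 0) (at t)"
      unfolding bk_def by (intro DERIV_diff DERIV_add d1 DERIV_cmult d2 DERIV_const)
    then show ?thesis by (simp add: bk_def)
  qed
  moreover have "\<forall>k\<le>N. \<forall>t. \<bar>bk k t\<bar> \<le> 2 * B + 1"
  proof (intro allI impI)
    fix k and t :: real assume "k \<le> N"
    then have "\<bar>u k (t + 2)\<bar> \<le> B" "\<bar>u k (2 - t)\<bar> \<le> B" using B by auto
    moreover have "\<bar>(-1) ^ k * u k (2 - t)\<bar> = \<bar>u k (2 - t)\<bar>" by (simp add: abs_mult power_abs)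
    moreover have "\<bar>(if k = 0 then 1 else 0)\<bar> \<le> (1::real)" by simp
    ultimately show "\<bar>bk k t\<bar> \<le> 2 * B + 1" unfolding bk_def by linarith
  qed
  moreover have "\<forall>k\<le>N. \<forall>t. \<bar>t\<bar> \<ge> 2 \<longrightarrow> bk k t = 0"
  proof (intro allI impI)
    fix k and t :: real assume k: "k \<le> N" and t: "\<bar>t\<bar> \<ge> 2"
    show "bk k t = 0"
    proof (cases "k = 0")
      case True
      then show ?thesis using t u0 u1 by (cases "t \<ge> 0") (auto simp: bk_def)
    next
      case False
      have a: "t + 2 \<le> 0 \<or> t + 2 \<ge> 1" "2 - t \<le> 0 \<or> 2 - t \<ge> 1" using t by linarith+
      have "u k (t + 2) = 0" "u k (2 - t) = 0" using uk[rule_format, OF conjI[OF _ conjI[OF k]]] False a by auto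
      then show ?thesis using False by (simp add: bk_def)
    qed
  qed
  moreover have "\<forall>t. \<bar>t\<bar> \<le> 1 \<longrightarrow> bk 0 t = 1"
    using u1 by (auto simp: bk_def)
  ultimately show ?thesis by blast
qed



lemma ebump:
  fixes bk :: "nat \<Rightarrow> real \<Rightarrow> real"
  assumes d: "\<forall>k<N. \<forall>t. (bk k has_real_derivative bk (Suc k) t) (at t)"
    and B: "\<forall>k\<le>N. \<forall>t. \<bar>bk k t\<bar> \<le> B" and s: "\<forall>k\<le>N. \<forall>t. \<bar>t\<bar> \<ge> 2 \<longrightarrow> bk k t = 0"
  defines "ek \<equiv> \<lambda>k t. t * bk k t + real k * bk (k - 1) t"
  shows "\<forall>k<N. \<forall>t. (ek k has_real_derivative ek (Suc k) t) (at t)"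
    and "\<forall>k\<le>N. \<forall>t. \<bar>ek k t\<bar> \<le> 2 * B + real N * B"
proof (intro allI impI)
  fix k t assume k: "k < N"
  have d1: "((\<lambda>t. t * bk k t) has_real_derivative 1 * bk k t + bk (Suc k) t * t) (at t)"
    by (intro DERIV_mult DERIV_ident d[rule_format, OF k])
  have d2: "((\<lambda>t. real k * bk (k - 1) t) has_real_derivative real k * bk k t) (at t)"
  proof (cases k)
    case 0 then show ?thesis by simp
  next
    case (Suc j)
    have "((\<lambda>t. real k * bk j t) has_real_derivative real k * bk (Suc j) t) (at t)"
      by (intro DERIV_cmult d[rule_format]) (use k Suc in simp)
    then show ?thesis using Suc by simp
  qed
  have "(ek k has_real_derivative (1 * bk k t + bk (Suc k) t * t) + real k * bk k t) (at t)"
    unfolding ek_def by (rule DERIV_add[OF d1 d2])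
  then show "(ek k has_real_derivative ek (Suc k) t) (at t)"
    by (simp add: ek_def algebra_simps)
next
  show "\<forall>k\<le>N. \<forall>t. \<bar>ek k t\<bar> \<le> 2 * B + real N * B"
  proof (intro allI impI)
    fix k and t :: real assume k: "k \<le> N"
    have B0: "0 \<le> B" using B[rule_format, of 0 0] by simp
    have a: "\<bar>t * bk k t\<bar> \<le> 2 * B"
    proof (cases "\<bar>t\<bar> \<ge> 2")
      case True then show ?thesis using s k B0 by simp
    next
      case False
      then have "\<bar>t\<bar> * \<bar>bk k t\<bar> \<le> 2 * B"
        using B k by (intro mult_mono) auto
      then show ?thesis by (simp add: abs_mult)
    qed
    have b: "\<bar>real k * bk (k - 1) t\<bar> \<le> real N * B"
      unfolding abs_mult using B k by (intro mult_mono) auto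
    show "\<bar>ek k t\<bar> \<le> 2 * B + real N * B"
      unfolding ek_def using a b by linarith
  qed
qed

lemma prod_list_le_1:
  assumes "\<forall>h\<in>set hs. norm h \<le> 1"
  shows "prod_list (map norm (hs :: ('a::real_normed_vector) list)) \<le> 1"
  using assms
proof (induction hs)
  case (Cons h hs)
  then show ?case by (simp add: mult_le_one prod_list_norm_nonneg)
qed simp

lemma taylor_bound:
  fixes G :: "real^'n \<Rightarrow> (real^'n) list \<Rightarrow> real"
  assumes chain: "\<forall>hs x. length hs < Suc m \<longrightarrow> ((\<lambda>y. G y hs) has_derivative (\<lambda>v. G x (hs @ [v]))) (at x)"
    and bnd: "\<forall>hs x. length hs \<le> Suc m \<longrightarrow> \<bar>G x hs\<bar> \<le> B * prod_list (map norm hs)"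
    and k: "length hs \<le> m" and hn: "\<forall>h\<in>set hs. norm h \<le> 1"
  shows "\<bar>G y hs - (\<Sum>j\<le>m - length hs. (1 / fact j) * G x (hs @ replicate j (y - x)))\<bar>
           \<le> B * norm (y - x) ^ Suc (m - length hs)"
proof -
  define d where "d = y - x"
  define M where "M = Suc (m - length hs)"
  define diff where "diff j t = G (x + t *\<^sub>R d) (hs @ replicate j d)" for j and t :: real
  have B0: "0 \<le> B" using bnd[rule_format, of "[]" x] by simp
  have der: "\<forall>j t. j < M \<and> 0 \<le> t \<and> t \<le> 1 \<longrightarrow> (diff j has_real_derivative diff (Suc j) t) (at t)"
  proof (intro allI impI)
    fix j and t :: real assume "j < M \<and> 0 \<le> t \<and> t \<le> 1"
    then have jl: "length (hs @ replicate j d) < Suc m" using k unfolding M_def by simp arith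
    define z where "z = x + t *\<^sub>R d"
    have H: "((\<lambda>y. G y (hs @ replicate j d)) has_derivative (\<lambda>v. G z (hs @ replicate j d @ [v]))) (at z)"
      using chain[rule_format, OF jl, of z] by simp
    have L: "((\<lambda>t. x + t *\<^sub>R d) has_derivative (\<lambda>s. s *\<^sub>R d)) (at t)"
      by (auto intro!: derivative_eq_intros)
    have C: "((\<lambda>t. G (x + t *\<^sub>R d) (hs @ replicate j d)) has_derivative (\<lambda>s. G z (hs @ replicate j d @ [s *\<^sub>R d]))) (at t)"
      unfolding z_def using has_derivative_compose[OF L H[unfolded z_def]] by simp
    have lin: "linear (\<lambda>v. G z (hs @ replicate j d @ [v]))" using has_derivative_linear[OF H] .
    have "(\<lambda>s. G z (hs @ replicate j d @ [s *\<^sub>R d])) = (*) (G z (hs @ replicate j d @ [d]))"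
      using linear_scale[OF lin] by (auto simp: fun_eq_iff)
    moreover have "hs @ replicate j d @ [d] = hs @ replicate (Suc j) d"
      by (simp add: replicate_append_same)
    ultimately have "((\<lambda>t. G (x + t *\<^sub>R d) (hs @ replicate j d)) has_derivative (*) (diff (Suc j) t)) (at t)"
      using C by (simp add: diff_def z_def)
    then show "(diff j has_real_derivative diff (Suc j) t) (at t)"
      unfolding has_field_derivative_def diff_def by simp
  qed
  obtain t where t: "0 < t" "t < 1"
    and T: "diff 0 1 = (\<Sum>j<M. (diff j 0 / fact j) * (1 - 0)^j) + (diff M t / fact M) * (1 - 0)^M"
  proof -
    have "\<exists>t. (if 1 < (0::real) then 1 < t \<and> t < 0 else 0 < t \<and> t < 1) \<and>
      diff 0 1 = (\<Sum>j<M. (diff j 0 / fact j) * (1 - 0)^j) + (diff M t / fact M) * (1 - 0)^M"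
      by (rule Taylor[of M diff "diff 0" 0 1 0 1]) (use der in \<open>simp_all add: M_def\<close>)
    then show ?thesis using that by auto
  qed
  have e1: "diff 0 1 = G y hs" by (simp add: diff_def d_def)
  have e2: "(\<Sum>j<M. (diff j 0 / fact j) * (1 - 0)^j) = (\<Sum>j\<le>m - length hs. (1 / fact j) * G x (hs @ replicate j (y - x)))"
    unfolding M_def lessThan_Suc_atMost by (rule sum.cong) (simp_all add: diff_def d_def)
  have "\<bar>diff M t\<bar> \<le> B * prod_list (map norm (hs @ replicate M d))"
    unfolding diff_def by (rule bnd[rule_format]) (use k in \<open>simp add: M_def\<close>)
  also have "\<dots> = B * prod_list (map norm hs) * norm d ^ M"
    by (simp add: prod_list_replicate mult_ac)
  also have "\<dots> \<le> B * 1 * norm d ^ M"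
    by (intro mult_right_mono mult_left_mono prod_list_le_1 hn B0) simp_all
  finally have dM: "\<bar>diff M t\<bar> \<le> B * norm d ^ M" by simp
  have "\<bar>diff M t / fact M\<bar> \<le> \<bar>diff M t\<bar>"
  proof -
    have "(1::real) \<le> fact M" by (rule fact_ge_1)
    then have "\<bar>diff M t\<bar> / fact M \<le> \<bar>diff M t\<bar> / 1" by (intro divide_left_mono) simp_all
    then show ?thesis by simp
  qed
  then show ?thesis using T e1 e2 dM by (simp add: M_def d_def)
qed



lemma lip_order_bounds:
  assumes "\<gamma> \<ge> 1"
  shows "real (lip_order \<gamma>) < \<gamma>" "\<gamma> \<le> real (lip_order \<gamma>) + 1"
proof -
  have c: "\<lceil>\<gamma>\<rceil> \<ge> 1" using assms by linarith
  have e: "real (lip_order \<gamma>) = real_of_int \<lceil>\<gamma>\<rceil> - 1"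
    using c by (simp add: lip_order_def)
  show "real (lip_order \<gamma>) < \<gamma>" unfolding e by linarith
  show "\<gamma> \<le> real (lip_order \<gamma>) + 1" unfolding e by linarith
qed

lemma pow_powr:
  assumes r: "0 \<le> r" "r \<le> 2" and k: "k \<le> m" and g: "real m < \<gamma>" "\<gamma> \<le> real m + 1"
  shows "r ^ Suc (m - k) \<le> 2 * r powr (\<gamma> - real k)"
proof (cases "r = 0")
  case True then show ?thesis by simp
next
  case False
  then have rp: "0 < r" using r by simp
  define e where "e = real (Suc (m - k)) - (\<gamma> - real k)"
  have e0: "0 \<le> e" "e \<le> 1" using k g by (auto simp: e_def of_nat_diff)
  have "r ^ Suc (m - k) = r powr real (Suc (m - k))" using rp by (rule powr_realpow[symmetric])
  also have "\<dots> = r powr (\<gamma> - real k) * r powr e" by (simp add: e_def flip: powr_add)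
  also have "\<dots> \<le> r powr (\<gamma> - real k) * 2"
  proof (rule mult_left_mono)
    have "r powr e \<le> 2 powr e" using e0 r by (intro powr_mono2) simp_all
    also have "\<dots> \<le> 2 powr 1" using e0 by (intro powr_mono) simp_all
    finally show "r powr e \<le> 2" by simp
  qed simp
  finally show ?thesis by simp
qed

lemma norm_sum_axis:
  "norm (\<Sum>l\<in>UNIV. c l *\<^sub>R (axis l 1 :: real^'n)) \<le> (\<Sum>l\<in>UNIV. \<bar>c l\<bar>)"
proof -
  have "norm (\<Sum>l\<in>UNIV. c l *\<^sub>R (axis l 1 :: real^'n)) \<le> (\<Sum>l\<in>UNIV. norm (c l *\<^sub>R (axis l 1 :: real^'n)))"
    by (rule norm_sum)
  also have "\<dots> = (\<Sum>l\<in>UNIV. \<bar>c l\<bar>)" by (simp add: norm_axis_1)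
  finally show ?thesis .
qed

lemma vec_lip:
  fixes GG :: "'n::finite \<Rightarrow> real^'n \<Rightarrow> (real^'n) list \<Rightarrow> real"
  assumes chain: "\<forall>l hs x. length hs < Suc (lip_order \<gamma>) \<longrightarrow> ((\<lambda>y. GG l y hs) has_derivative (\<lambda>v. GG l x (hs @ [v]))) (at x)"
    and bnd: "\<forall>l hs x. length hs \<le> Suc (lip_order \<gamma>) \<longrightarrow> \<bar>GG l x hs\<bar> \<le> BB l * prod_list (map norm hs)"
    and g1: "\<gamma> \<ge> 1"
  shows "lip_gamma_on \<gamma> (2 * (\<Sum>l\<in>UNIV. BB l) + 1) (ball 0 1) (\<lambda>y. \<Sum>l\<in>UNIV. GG l (y + a) [] *\<^sub>R axis l (1::real))"
proof -
  define m where "m = lip_order \<gamma>"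
  have gm: "real m < \<gamma>" "\<gamma> \<le> real m + 1" using lip_order_bounds[OF g1] by (simp_all add: m_def)
  have BB0: "0 \<le> BB l" for l using bnd[rule_format, of "[]" l 0] by simp
  define L where "L = 2 * (\<Sum>l\<in>UNIV. BB l) + 1"
  have SB0: "0 \<le> (\<Sum>l\<in>UNIV. BB l)" by (simp add: BB0 sum_nonneg)
  define F where "F = (\<lambda>(k::nat) x hs. \<Sum>l\<in>UNIV. GG l (x + a) hs *\<^sub>R (axis l 1 :: real^'n))"
  show ?thesis unfolding lip_gamma_on_def m_def[symmetric] L_def[symmetric]
  proof (rule exI[where x=F], intro conjI ballI allI impI)
    fix x :: "real^'n" show "F 0 x [] = (\<Sum>l\<in>UNIV. GG l (x + a) [] *\<^sub>R axis l (1::real))" by (simp add: F_def)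
  next
    fix k and hs :: "(real^'n) list" and x :: "real^'n" assume k: "k < m" and hs: "length hs = k"
    have "((\<lambda>y. F k y hs) has_derivative (\<lambda>v. F (Suc k) x (hs @ [v]))) (at x)"
      unfolding F_def
    proof (intro has_derivative_sum has_derivative_scaleR_left)
      fix l
      have T: "((\<lambda>y::real^'n. y + a) has_derivative (\<lambda>v. v)) (at x)"
        by (auto intro!: derivative_eq_intros)
      have "length hs < Suc m" using k hs by simp
      then have "((\<lambda>y. GG l y hs) has_derivative (\<lambda>v. GG l (x + a) (hs @ [v]))) (at (x + a))"
        using chain m_def by blast
      from has_derivative_compose[OF T this]
      show "((\<lambda>y. GG l (y + a) hs) has_derivative (\<lambda>v. GG l (x + a) (hs @ [v]))) (at x)" by simp
    qed
    then show "((\<lambda>y. F k y hs) has_derivative (\<lambda>v. F (Suc k) x (hs @ [v]))) (at x within ball 0 1)"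
      by (rule has_derivative_at_withinI)
  next
    fix k and hs :: "(real^'n) list" and x :: "real^'n" assume k: "k \<le> m" and hs: "length hs = k \<and> (\<forall>h\<in>set hs. norm h \<le> 1)"
    have "norm (F k x hs) \<le> (\<Sum>l\<in>UNIV. \<bar>GG l (x + a) hs\<bar>)" unfolding F_def by (rule norm_sum_axis)
    also have "\<dots> \<le> (\<Sum>l\<in>UNIV. BB l)"
    proof (rule sum_mono)
      fix l
      have "\<bar>GG l (x + a) hs\<bar> \<le> BB l * prod_list (map norm hs)"
        using bnd k hs m_def by simp
      also have "\<dots> \<le> BB l * 1" using hs by (intro mult_left_mono prod_list_le_1 BB0) simp_all
      finally show "\<bar>GG l (x + a) hs\<bar> \<le> BB l" by simp
    qed
    also have "\<dots> \<le> L" using SB0 by (simp add: L_def)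
    finally show "norm (F k x hs) \<le> L" .
  next
    fix k and hs :: "(real^'n) list" and x y :: "real^'n" assume k: "k \<le> m" and xb: "x \<in> ball 0 1" and yb: "y \<in> ball 0 1"
      and hs: "length hs = k \<and> (\<forall>h\<in>set hs. norm h \<le> 1)"
    have nxy: "norm (y - x) \<le> 2"
    proof -
      have "norm (y - x) \<le> norm y + norm x" by (rule norm_triangle_ineq4)
      then show ?thesis using xb yb by simp
    qed
    let ?R = "\<lambda>l. GG l (y + a) hs - (\<Sum>j\<le>m - k. (1 / fact j) * GG l (x + a) (hs @ replicate j (y - x)))"
    have e: "F k y hs - (\<Sum>j\<le>m - k. (1 / fact j) *\<^sub>R F (k + j) x (hs @ replicate j (y - x)))
        = (\<Sum>l\<in>UNIV. ?R l *\<^sub>R (axis l 1 :: real^'n))"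
      unfolding F_def by (simp add: scaleR_sum_right sum_subtractf scaleR_diff_left sum_distrib_left
          scaleR_sum_left sum.swap[of _ "{..m-k}"])
    have "norm (F k y hs - (\<Sum>j\<le>m - k. (1 / fact j) *\<^sub>R F (k + j) x (hs @ replicate j (y - x))))
        \<le> (\<Sum>l\<in>UNIV. \<bar>?R l\<bar>)" unfolding e by (rule norm_sum_axis)
    also have "\<dots> \<le> (\<Sum>l\<in>UNIV. BB l * (2 * norm (x - y) powr (\<gamma> - real k)))"
    proof (rule sum_mono)
      fix l
      have c: "\<forall>hs x. length hs < Suc m \<longrightarrow> ((\<lambda>y. GG l y hs) has_derivative (\<lambda>v. GG l x (hs @ [v]))) (at x)"
        using chain m_def by blast
      have b: "\<forall>hs x. length hs \<le> Suc m \<longrightarrow> \<bar>GG l x hs\<bar> \<le> BB l * prod_list (map norm hs)"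
        using bnd m_def by blast
      have "\<bar>?R l\<bar> \<le> BB l * norm ((y + a) - (x + a)) ^ Suc (m - length hs)"
        using taylor_bound[OF c b, of hs "y + a" "x + a"] hs k by simp
      also have "\<dots> = BB l * norm (y - x) ^ Suc (m - k)" using hs by simp
      also have "\<dots> \<le> BB l * (2 * norm (y - x) powr (\<gamma> - real k))"
        by (intro mult_left_mono pow_powr nxy k gm BB0) simp
      finally show "\<bar>?R l\<bar> \<le> BB l * (2 * norm (x - y) powr (\<gamma> - real k))"
        by (simp add: norm_minus_commute)
    qed
    also have "\<dots> = 2 * (\<Sum>l\<in>UNIV. BB l) * norm (x - y) powr (\<gamma> - real k)"
      by (simp add: sum_distrib_right mult_ac)
    also have "\<dots> \<le> L * norm (x - y) powr (\<gamma> - real k)"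
      by (intro mult_right_mono) (simp_all add: L_def)
    finally show "norm (F k y hs - (\<Sum>j\<le>m - k. (1 / fact j) *\<^sub>R F (k + j) x (hs @ replicate j (y - x))))
        \<le> L * norm (x - y) powr (\<gamma> - real k)" .
  qed
qed



lemma h_exists:
  fixes \<gamma> :: real
  assumes g1: "\<gamma> \<ge> 1"
  shows "\<exists>h::real^'n \<Rightarrow> real^'n. (\<forall>x. norm x < 1 \<longrightarrow> h x = x) \<and>
     (\<forall>x. norm x \<ge> 2 * real CARD('n) \<longrightarrow> h x = 0) \<and> continuous_on UNIV h \<and>
     (\<exists>L>0. \<forall>a. lip_gamma_on \<gamma> L (ball 0 1) (\<lambda>y. h (y + a)))"
proof -
  define N where "N = Suc (lip_order \<gamma>)"
  obtain bk B where d: "\<forall>k<N. \<forall>t. (bk k has_real_derivative bk (Suc k) t) (at t)"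
    and B: "\<forall>k\<le>N. \<forall>t. \<bar>bk k t\<bar> \<le> B" and sp: "\<forall>k\<le>N. \<forall>t. \<bar>t\<bar> \<ge> 2 \<longrightarrow> bk k t = 0"
    and one: "\<forall>t. \<bar>t\<bar> \<le> 1 \<longrightarrow> bk 0 t = 1"
    using bump_exists[of N] by blast
  define ek where "ek = (\<lambda>k t. t * bk k t + real k * bk (k - 1) t)"
  note E = ebump[OF d B sp]
  define hl where "hl l x = ek 0 (x$l) * (\<Prod>l'\<in>UNIV - {l}. bk 0 (x$l'))" for l and x :: "real^'n"
  have nl: "nice N (hl l)" for l
  proof -
    have n1: "nice N (\<lambda>x::real^'n. ek 0 (1 * x$l + 0))"
      by (rule nice_ridge[of N ek "2 * B + real N * B"]) (use E in \<open>simp_all add: ek_def\<close>)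
    have n2: "nice N (\<lambda>x::real^'n. bk 0 (1 * x$l' + 0))" for l'
      by (rule nice_ridge[of N bk B]) (use d B in auto)
    have "nice N (\<lambda>x::real^'n. ek 0 (x$l) * (\<Prod>l'\<in>UNIV - {l}. bk 0 (x$l')))"
      by (rule nice_mult) (use n1 n2 in \<open>auto intro!: nice_prod\<close>)
    then show ?thesis by (simp add: hl_def[abs_def])
  qed
  have "\<forall>l. \<exists>GB. (\<forall>x. fst GB x [] = hl l x) \<and>
     (\<forall>hs x. length hs < N \<longrightarrow> ((\<lambda>y. fst GB y hs) has_derivative (\<lambda>v. fst GB x (hs @ [v]))) (at x)) \<and>
     (\<forall>hs x. length hs \<le> N \<longrightarrow> \<bar>fst GB x hs\<bar> \<le> snd GB * prod_list (map norm hs))"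
  proof
    fix l
    obtain G B where "(\<forall>x. G x [] = hl l x) \<and>
     (\<forall>hs x. length hs < N \<longrightarrow> ((\<lambda>y. G y hs) has_derivative (\<lambda>v. G x (hs @ [v]))) (at x)) \<and>
     (\<forall>hs x. length hs \<le> N \<longrightarrow> \<bar>G x hs\<bar> \<le> B * prod_list (map norm hs))"
      using nl[of l] unfolding nice_def by blast
    then show "\<exists>GB. (\<forall>x. fst GB x [] = hl l x) \<and>
     (\<forall>hs x. length hs < N \<longrightarrow> ((\<lambda>y. fst GB y hs) has_derivative (\<lambda>v. fst GB x (hs @ [v]))) (at x)) \<and>
     (\<forall>hs x. length hs \<le> N \<longrightarrow> \<bar>fst GB x hs\<bar> \<le> snd GB * prod_list (map norm hs))"
      by (intro exI[of _ "(G, B)"]) simp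
  qed
  then obtain GB where GB: "\<And>l. (\<forall>x. fst (GB l) x [] = hl l x) \<and>
     (\<forall>hs x. length hs < N \<longrightarrow> ((\<lambda>y. fst (GB l) y hs) has_derivative (\<lambda>v. fst (GB l) x (hs @ [v]))) (at x)) \<and>
     (\<forall>hs x. length hs \<le> N \<longrightarrow> \<bar>fst (GB l) x hs\<bar> \<le> snd (GB l) * prod_list (map norm hs))"
    by metis
  define GG where "GG l = fst (GB l)" for l
  define BB where "BB l = snd (GB l)" for l
  have GG0: "GG l x [] = hl l x" for l x using GB[of l] by (simp add: GG_def)
  have chain: "\<forall>l hs x. length hs < Suc (lip_order \<gamma>) \<longrightarrow> ((\<lambda>y. GG l y hs) has_derivative (\<lambda>v. GG l x (hs @ [v]))) (at x)"
    using GB by (simp add: GG_def N_def)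
  have bnd: "\<forall>l hs x. length hs \<le> Suc (lip_order \<gamma>) \<longrightarrow> \<bar>GG l x hs\<bar> \<le> BB l * prod_list (map norm hs)"
    using GB by (simp add: GG_def BB_def N_def)
  have BB0: "0 \<le> BB l" for l using bnd[rule_format, of "[]" l 0] by simp
  define h where "h x = (\<Sum>l\<in>UNIV. GG l x [] *\<^sub>R axis l (1::real))" for x :: "real^'n"
  have lip: "lip_gamma_on \<gamma> (2 * (\<Sum>l\<in>UNIV. BB l) + 1) (ball 0 1) (\<lambda>y. h (y + a))" for a
    unfolding h_def by (rule vec_lip[OF chain bnd g1])
  have Lpos: "0 < 2 * (\<Sum>l\<in>UNIV. BB l) + 1" using BB0 by (simp add: sum_nonneg add_nonneg_pos)
  have hid: "h x = x" if "norm x < 1" for x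
  proof -
    have "hl l x = x$l" for l
    proof -
      have "\<bar>x$i\<bar> < 1" for i using component_le_norm_cart[of x i] that by simp
      then have "bk 0 (x$i) = 1" for i using one less_imp_le by blast
      then show ?thesis by (simp add: hl_def ek_def)
    qed
    then have "h x = (\<Sum>l\<in>UNIV. x$l *s axis l 1)" by (simp add: h_def GG0 scalar_mult_eq_scaleR)
    then show ?thesis by (simp add: basis_expansion)
  qed
  have hz: "h x = 0" if "norm x \<ge> 2 * real CARD('n)" for x
  proof -
    have "hl l x = 0" for l
    proof (rule ccontr)
      assume nz: "hl l x \<noteq> 0"
      have "\<bar>x$i\<bar> < 2" for i
      proof (cases "i = l")
        case True
        have "ek 0 (x$l) \<noteq> 0" using nz by (auto simp: hl_def)
        then have "bk 0 (x$l) \<noteq> 0" by (simp add: ek_def)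
        then show ?thesis using sp True by force
      next
        case False
        have "(\<Prod>l'\<in>UNIV - {l}. bk 0 (x$l')) \<noteq> 0" using nz by (auto simp: hl_def)
        then have "bk 0 (x$i) \<noteq> 0" using False by simp
        then show ?thesis using sp by force
      qed
      then have "(\<Sum>i\<in>UNIV. \<bar>x$i\<bar>) < (\<Sum>i\<in>(UNIV::'n set). 2)"
        by (intro sum_strict_mono) auto
      then have "norm x < 2 * real CARD('n)" using norm_le_l1_cart[of x] by (simp add: mult.commute)
      then show False using that by simp
    qed
    then show ?thesis by (simp add: h_def GG0)
  qed
  have "continuous_on UNIV h"
  proof (rule continuous_at_imp_continuous_on, intro ballI)
    fix x :: "real^'n"
    have "(h has_derivative (\<lambda>v. \<Sum>l\<in>UNIV. GG l x [v] *\<^sub>R axis l (1::real))) (at x)"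
      unfolding h_def
    proof (intro has_derivative_sum has_derivative_scaleR_left)
      fix l
      show "((\<lambda>x. GG l x []) has_derivative (\<lambda>v. GG l x [v])) (at x)"
        using chain[rule_format, of "[]" l x] by simp
    qed
    then show "isCont h x" by (rule has_derivative_continuous)
  qed
  then show ?thesis using hid hz lip Lpos by blast
qed



lemma homeo_map_of:
  assumes "homeomorphism S T f g"
  shows "homeomorphic_map (top_of_set S) (top_of_set T) f"
  unfolding homeomorphic_map_maps
  using assms by (force simp: Pi_iff homeomorphic_maps_def homeomorphism_def)

lemma second_countable_euclidean: "second_countable (euclidean :: 'a::second_countable_topology topology)"
proof -
  obtain \<B> :: "'a set set" where B: "countable \<B>" "\<And>C. C \<in> \<B> \<Longrightarrow> open C"
    "\<And>S. open S \<Longrightarrow> \<exists>U. U \<subseteq> \<B> \<and> S = \<Union>U"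
    by (rule univ_second_countable) blast
  show ?thesis unfolding second_countable_def
  proof (intro exI conjI ballI allI impI)
    show "countable \<B>" by (rule B(1))
    show "openin euclidean V" if "V \<in> \<B>" for V using B(2)[OF that] by simp
    fix U :: "'a set" and x :: 'a assume "openin euclidean U \<and> x \<in> U"
    then obtain W where "W \<subseteq> \<B>" "U = \<Union>W" "x \<in> U" using B(3) by auto
    then show "\<exists>V\<in>\<B>. x \<in> V \<and> V \<subseteq> U" by auto
  qed
qed

definition lattice :: "(real^'n) set" where "lattice = {c. \<forall>l. c$l \<in> \<int>}"

lemma lattice_eq:
  assumes "c \<in> lattice" shows "c = (\<chi> l. real_of_int (\<lfloor>c$l\<rfloor>))"
proof -
  have "c$l = real_of_int (\<lfloor>c$l\<rfloor>)" for l
  proof -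
    have "c$l \<in> \<int>" using assms by (simp add: lattice_def)
    then obtain k where "c$l = of_int k" by (rule Ints_cases)
    then show ?thesis by simp
  qed
  then show ?thesis by (simp add: vec_eq_iff)
qed

lemma lattice_countable: "countable (lattice :: (real^'n) set)"
proof -
  have "lattice \<subseteq> range (\<lambda>f::'n \<Rightarrow> int. \<chi> l. real_of_int (f l))"
  proof
    fix c :: "real^'n" assume "c \<in> lattice"
    then have "c = (\<chi> l. real_of_int (\<lfloor>c$l\<rfloor>))" by (rule lattice_eq)
    then show "c \<in> range (\<lambda>f::'n \<Rightarrow> int. \<chi> l. real_of_int (f l))" by (rule image_eqI[where x="\<lambda>l. \<lfloor>c$l\<rfloor>"]) auto
  qed
  then show ?thesis by (rule countable_subset) simp
qed

lemma lattice_infinite: "infinite (lattice :: (real^'n) set)"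
proof
  assume "finite (lattice :: (real^'n) set)"
  moreover have "range (\<lambda>k::int. (\<chi> l. real_of_int k) :: real^'n) \<subseteq> lattice"
    by (auto simp: lattice_def)
  moreover have "inj (\<lambda>k::int. (\<chi> l. real_of_int k) :: real^'n)"
    by (rule injI) (simp add: vec_eq_iff)
  ultimately show False
    by (meson finite_imageD finite_subset infinite_UNIV_int)
qed

lemma lattice_finite_ball: "finite {c \<in> (lattice :: (real^'n) set). norm (c - z) < r}"
proof -
  define M where "M = norm z + \<bar>r\<bar>"
  have "{c \<in> (lattice :: (real^'n) set). norm (c - z) < r} \<subseteq>
     (\<lambda>f. \<chi> l. real_of_int (f l)) ` (PiE UNIV (\<lambda>_. {\<lfloor>-M\<rfloor>..\<lceil>M\<rceil>}))"
  proof
    fix c :: "real^'n" assume c: "c \<in> {c \<in> lattice. norm (c - z) < r}"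
    have ce: "c = (\<chi> l. real_of_int (\<lfloor>c$l\<rfloor>))"
      using c by (simp add: lattice_eq)
    have "norm c \<le> M"
    proof -
      have "norm c \<le> norm z + norm (c - z)" by (rule norm_triangle_sub)
      then show ?thesis using c by (auto simp: M_def)
    qed
    then have "\<bar>c$l\<bar> \<le> M" for l using component_le_norm_cart[of c l] by linarith
    have "\<lfloor>c$l\<rfloor> \<in> {\<lfloor>-M\<rfloor>..\<lceil>M\<rceil>}" for l
    proof -
      have a: "-M \<le> c$l" "c$l \<le> M" using \<open>\<And>l. \<bar>c$l\<bar> \<le> M\<close>[of l] by linarith+
      have "\<lfloor>-M\<rfloor> \<le> \<lfloor>c$l\<rfloor>" by (rule floor_mono[OF a(1)])
      moreover have "\<lfloor>c$l\<rfloor> \<le> \<lceil>M\<rceil>" using floor_mono[OF a(2)] floor_le_ceiling[of M] by linarith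
      ultimately show ?thesis by simp
    qed
    then have "(\<lambda>l. \<lfloor>c$l\<rfloor>) \<in> PiE UNIV (\<lambda>_. {\<lfloor>-M\<rfloor>..\<lceil>M\<rceil>})" by auto
    then show "c \<in> (\<lambda>f. \<chi> l. real_of_int (f l)) ` (PiE UNIV (\<lambda>_. {\<lfloor>-M\<rfloor>..\<lceil>M\<rceil>}))"
      using ce by (intro image_eqI[where x="\<lambda>l. \<lfloor>c$l\<rfloor>"]) auto
  qed
  moreover have "finite (PiE (UNIV::'n set) (\<lambda>_. {\<lfloor>-M\<rfloor>..\<lceil>M\<rceil>}))"
    by (rule finite_PiE) auto
  ultimately show ?thesis by (meson finite_imageI finite_subset)
qed

lemma lattice_near:
  fixes z :: "real^'n"
  shows "\<exists>c\<in>lattice. norm (z - c) \<le> real CARD('n) / 2"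
proof
  define c :: "real^'n" where "c = (\<chi> l. real_of_int (round (z$l)))"
  show "c \<in> lattice" by (simp add: c_def lattice_def)
  have "norm (z - c) \<le> (\<Sum>l\<in>UNIV. \<bar>(z - c)$l\<bar>)" by (rule norm_le_l1_cart)
  also have "\<dots> \<le> (\<Sum>l\<in>(UNIV::'n set). 1/2)"
  proof (rule sum_mono)
    fix l show "\<bar>(z - c)$l\<bar> \<le> 1/2"
      using of_int_round_abs_le[of "z$l"] by (simp add: c_def abs_minus_commute)
  qed
  finally show "norm (z - c) \<le> real CARD('n) / 2" by simp
qed

lemma lip_cong:
  assumes "lip_gamma_on \<gamma> L U f" "\<And>x. x \<in> U \<Longrightarrow> f x = g x"
  shows "lip_gamma_on \<gamma> L U g"
proof -
  obtain F where F: "(\<forall>x\<in>U. F 0 x [] = f x) \<and> (\<forall>k<lip_order \<gamma>. \<forall>hs. length hs = k \<longrightarrow>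
          (\<forall>x\<in>U. ((\<lambda>y. F k y hs) has_derivative (\<lambda>v. F (Suc k) x (hs @ [v]))) (at x within U))) \<and>
      (\<forall>k\<le>lip_order \<gamma>. \<forall>x\<in>U. \<forall>hs. length hs = k \<and> (\<forall>h\<in>set hs. norm h \<le> 1)
          \<longrightarrow> norm (F k x hs) \<le> L) \<and>
      (\<forall>k\<le>lip_order \<gamma>. \<forall>x\<in>U. \<forall>y\<in>U. \<forall>hs. length hs = k \<and> (\<forall>h\<in>set hs. norm h \<le> 1)
          \<longrightarrow> norm (F k y hs
                 - (\<Sum>j\<le>lip_order \<gamma> - k. (1 / fact j) *\<^sub>R F (k + j) x (hs @ replicate j (y - x))))
              \<le> L * norm (x - y) powr (\<gamma> - real k))"
    using assms(1) unfolding lip_gamma_on_def by (elim exE) assumption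
  have A: "\<forall>x\<in>U. F 0 x [] = g x" using conjunct1[OF F] assms(2) by simp
  show ?thesis unfolding lip_gamma_on_def
    by (rule exI[of _ F], rule conjI[OF A conjunct2[OF F]])
qed



lemma norm_divR: "(r::real) > 0 \<Longrightarrow> norm (v /\<^sub>R r) = norm v / r"
  by (simp only: norm_scaleR) (simp add: divide_inverse mult.commute)

theorem mainTheorem5:
  fixes \<gamma> :: real
  assumes "\<gamma> \<ge> 1"
  shows "\<exists>(I :: nat set) (U :: nat \<Rightarrow> (real^'n) set) (\<phi> :: nat \<Rightarrow> real^'n \<Rightarrow> real^'n).
           lip_gamma_manifold \<gamma> (top_of_set (ball (0::real^'n) 1)) I U \<phi>"
proof -
  define B1 where "B1 = ball (0::real^'n) 1"
  obtain \<Theta> \<Psi> where hom: "homeomorphism B1 (UNIV::(real^'n) set) \<Theta> \<Psi>"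
    using homeomorphic_ball_UNIV[of 1 "0::real^'n"] unfolding homeomorphic_def B1_def by auto
  have \<Theta>c: "continuous_on B1 \<Theta>" and \<Psi>c: "continuous_on UNIV \<Psi>" and \<Psi>B: "\<And>y. \<Psi> y \<in> B1"
    and \<Psi>\<Theta>: "\<And>x. x \<in> B1 \<Longrightarrow> \<Psi> (\<Theta> x) = x" and \<Theta>\<Psi>: "\<And>y. \<Theta> (\<Psi> y) = y"
    using hom unfolding homeomorphism_def by auto
  obtain h :: "real^'n \<Rightarrow> real^'n" where hid: "\<And>x. norm x < 1 \<Longrightarrow> h x = x"
    and hz: "\<And>x. norm x \<ge> 2 * real CARD('n) \<Longrightarrow> h x = 0" and hc: "continuous_on UNIV h"
    and hL: "\<exists>L>0. \<forall>a. lip_gamma_on \<gamma> L (ball 0 1) (\<lambda>y. h (y + a))"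
    using h_exists[OF assms] by blast
  define \<rho> where "\<rho> = real CARD('n)"
  have \<rho>1: "\<rho> \<ge> 1" unfolding \<rho>_def using card_ge_0_finite[of "UNIV::'n set"] by (simp add: Suc_le_eq)
  define e where "e = from_nat_into (lattice :: (real^'n) set)"
  have bij: "bij_betw e UNIV lattice"
    unfolding e_def by (rule bij_betw_from_nat_into[OF lattice_countable lattice_infinite])
  have eL: "e i \<in> lattice" for i using bij by (auto simp: bij_betw_def)
  have esurj: "\<exists>i. e i = c" if "c \<in> lattice" for c
  proof -
    have "c \<in> range e" using bij that by (simp add: bij_betw_def)
    then show ?thesis by (metis rangeE)
  qed
  have einj: "inj e" using bij by (simp add: bij_betw_def)
  define U where "U i = {x \<in> B1. \<Theta> x \<in> ball (e i) \<rho>}" for i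
  define \<phi> where "\<phi> i x = h ((\<Theta> x - e i) /\<^sub>R \<rho>)" for i x
  define g where "g i y = \<Psi> (e i + \<rho> *\<^sub>R y)" for i y
  have UB: "U i \<subseteq> B1" for i by (auto simp: U_def)
  have Uopen: "open (U i)" for i
  proof -
    have "open (\<Theta> -` ball (e i) \<rho> \<inter> B1)"
      using \<Theta>c unfolding B1_def by (subst (asm) continuous_on_open_vimage) auto
    moreover have "\<Theta> -` ball (e i) \<rho> \<inter> B1 = U i" by (auto simp: U_def)
    ultimately show ?thesis by simp
  qed
  have \<phi>U: "\<phi> i x = (\<Theta> x - e i) /\<^sub>R \<rho>" and \<phi>Un: "norm ((\<Theta> x - e i) /\<^sub>R \<rho>) < 1" if "x \<in> U i" for i x
  proof -
    have "dist (e i) (\<Theta> x) < \<rho>" using that by (simp add: U_def)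
    then have "norm (\<Theta> x - e i) < \<rho>" by (simp add: dist_norm norm_minus_commute)
    moreover have "norm ((\<Theta> x - e i) /\<^sub>R \<rho>) = norm (\<Theta> x - e i) / \<rho>" using \<rho>1 by (intro norm_divR) simp
    ultimately show n: "norm ((\<Theta> x - e i) /\<^sub>R \<rho>) < 1" using \<rho>1 by (simp only: divide_less_eq_1_pos)
    then show "\<phi> i x = (\<Theta> x - e i) /\<^sub>R \<rho>" by (simp add: \<phi>_def hid)
  qed
  have \<phi>c: "continuous_on B1 (\<phi> i)" for i
    unfolding \<phi>_def[abs_def]
    by (rule continuous_on_compose2[OF hc]) (auto intro!: continuous_intros \<Theta>c)
  have \<Theta>g: "\<Theta> (g i y) = e i + \<rho> *\<^sub>R y" for i y by (simp add: g_def \<Theta>\<Psi>)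
  have gU: "g i y \<in> U i" if "y \<in> B1" for i y
  proof -
    have "norm (\<rho> *\<^sub>R y) < \<rho>" using that \<rho>1 by (simp add: B1_def)
    then show ?thesis by (simp add: U_def \<Psi>B g_def \<Theta>\<Psi> dist_norm)
  qed
  have \<phi>g: "\<phi> i (g i y) = y" if "y \<in> B1" for i y
  proof -
    have "(\<Theta> (g i y) - e i) /\<^sub>R \<rho> = y" using \<rho>1 by (simp add: \<Theta>g)
    then show ?thesis using that by (simp add: \<phi>_def hid B1_def)
  qed
  have g\<phi>: "g i (\<phi> i x) = x" if "x \<in> U i" for i x
  proof -
    have "e i + \<rho> *\<^sub>R ((\<Theta> x - e i) /\<^sub>R \<rho>) = \<Theta> x" using \<rho>1 by simp
    moreover have xB: "x \<in> B1" using that UB by blast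
    ultimately show ?thesis using \<phi>U[OF that] \<Psi>\<Theta>[OF xB] by (simp add: g_def)
  qed
  have homU: "homeomorphism (U i) B1 (\<phi> i) (g i)" for i
    unfolding homeomorphism_def
  proof (intro conjI ballI)
    show "\<phi> i ` U i = B1"
    proof
      show "\<phi> i ` U i \<subseteq> B1" using \<phi>U \<phi>Un by (auto simp: B1_def)
      show "B1 \<subseteq> \<phi> i ` U i" using gU \<phi>g by (metis image_eqI subsetI)
    qed
    show "g i ` B1 = U i"
    proof
      show "g i ` B1 \<subseteq> U i" using gU by auto
      show "U i \<subseteq> g i ` B1"
      proof
        fix x assume x: "x \<in> U i"
        have "\<phi> i x \<in> B1" using \<phi>U[OF x] \<phi>Un[OF x] by (simp add: B1_def)
        then show "x \<in> g i ` B1" using g\<phi>[OF x] by (metis image_eqI)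
      qed
    qed
    show "continuous_on (U i) (\<phi> i)" by (rule continuous_on_subset[OF \<phi>c UB])
    show "continuous_on B1 (g i)"
      unfolding g_def[abs_def] by (rule continuous_on_compose2[OF \<Psi>c]) (auto intro!: continuous_intros)
    show "g i (\<phi> i x) = x" if "x \<in> U i" for x using g\<phi>[OF that] .
    show "\<phi> i (g i y) = y" if "y \<in> B1" for y using \<phi>g[OF that] .
  qed
  have \<Psi>K: "compact (\<Psi> ` K) \<and> \<Psi> ` K \<subseteq> B1" if "compact K" for K
    using compact_continuous_image[OF continuous_on_subset[OF \<Psi>c] that] \<Psi>B by auto
  let ?X = "top_of_set B1"
  have haus: "Hausdorff_space ?X" by (rule Hausdorff_space_subtopology) simp
  show ?thesis
    unfolding lip_gamma_manifold_def B1_def[symmetric]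
  proof (intro exI[of _ "UNIV :: nat set"] exI[of _ U] exI[of _ \<phi>] conjI ballI)
    show "Hausdorff_space ?X" by (rule haus)
    show "second_countable ?X" by (rule second_countable_subtopology[OF second_countable_euclidean])
    show "countable (UNIV :: nat set)" by simp
    show "openin ?X (U i)" for i using Uopen UB by (simp add: openin_open_eq B1_def)
    show "continuous_map ?X euclidean (\<phi> i)" for i using \<phi>c by simp
    show "\<exists>K. compactin ?X K \<and> (\<forall>x\<in>topspace ?X - K. \<phi> i x = 0)" for i
    proof -
      define K where "K = \<Psi> ` cball (e i) (\<rho> * (2 * \<rho>))"
      show ?thesis
      proof (intro exI[of _ K] conjI ballI)
      show "compactin ?X K" using \<Psi>K[of "cball (e i) (\<rho> * (2 * \<rho>))"] by (simp add: compactin_subtopology K_def)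
      fix x assume x: "x \<in> topspace ?X - K"
      then have xB: "x \<in> B1" "x \<notin> K" by auto
      have "\<Theta> x \<notin> cball (e i) (\<rho> * (2 * \<rho>))"
      proof
        assume "\<Theta> x \<in> cball (e i) (\<rho> * (2 * \<rho>))"
        then have "\<Psi> (\<Theta> x) \<in> K" by (simp add: K_def)
        then show False using xB \<Psi>\<Theta> by simp
      qed
      then have "norm (\<Theta> x - e i) > \<rho> * (2 * \<rho>)" by (simp add: dist_norm norm_minus_commute)
      moreover have "norm ((\<Theta> x - e i) /\<^sub>R \<rho>) = norm (\<Theta> x - e i) / \<rho>" using \<rho>1 by (intro norm_divR) simp
      ultimately have "norm ((\<Theta> x - e i) /\<^sub>R \<rho>) > 2 * \<rho>" using \<rho>1 by (simp only: less_divide_eq) (simp add: mult.commute)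
      then show "\<phi> i x = 0" unfolding \<phi>_def by (intro hz) (simp add: \<rho>_def)
    qed
    qed
    show "homeomorphic_map (subtopology ?X (U i)) (top_of_set B1) (\<phi> i)" for i
    proof -
      have "subtopology ?X (U i) = top_of_set (U i)"
        using UB by (simp add: subtopology_subtopology Int_absorb1)
      then show ?thesis using homeo_map_of[OF homU] by simp
    qed
    show "compactin ?X (?X closure_of (U i))" for i
    proof -
      define C where "C = \<Psi> ` cball (e i) \<rho>"
      have cC: "compactin ?X C" using \<Psi>K[of "cball (e i) \<rho>"] by (simp add: compactin_subtopology C_def)
      have "U i \<subseteq> C"
      proof
        fix x assume x: "x \<in> U i"
        then have "\<Theta> x \<in> cball (e i) \<rho>" by (auto simp: U_def)
        then show "x \<in> C" using x UB \<Psi>\<Theta> unfolding C_def by (metis image_eqI subsetD)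
      qed
      then have "?X closure_of (U i) \<subseteq> C"
        by (rule closure_of_minimal) (rule compactin_imp_closedin[OF haus cC])
      then show ?thesis by (rule closed_compactin[OF cC]) simp
    qed
    have cover: "\<exists>i. x \<in> U i \<and> norm (\<phi> i x) < 1 - 1/4" if x: "x \<in> B1" for x
    proof -
      obtain c where c: "c \<in> lattice" "norm (\<Theta> x - c) \<le> real CARD('n) / 2" using lattice_near by blast
      obtain i where i: "e i = c" using esurj[OF c(1)] by blast
      have n: "norm (\<Theta> x - e i) \<le> \<rho> / 2" using c i by (simp add: \<rho>_def)
      then have xU: "x \<in> U i" using x \<rho>1 by (simp add: U_def dist_norm norm_minus_commute)
      have "norm ((\<Theta> x - e i) /\<^sub>R \<rho>) = norm (\<Theta> x - e i) / \<rho>" using \<rho>1 by (intro norm_divR) simp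
      also have "\<dots> \<le> 1/2" using n \<rho>1 by (simp only: divide_le_eq) simp
      finally have "norm ((\<Theta> x - e i) /\<^sub>R \<rho>) \<le> 1/2" .
      then show ?thesis using xU \<phi>U[OF xU] by auto
    qed
    show "(\<Union>i\<in>UNIV. U i) = topspace ?X"
    proof
      show "(\<Union>i\<in>UNIV. U i) \<subseteq> topspace ?X" using UB by auto
      show "topspace ?X \<subseteq> (\<Union>i\<in>UNIV. U i)"
      proof
        fix x assume "x \<in> topspace ?X"
        then obtain i where "x \<in> U i" using cover by auto
        then show "x \<in> (\<Union>i\<in>UNIV. U i)" by blast
      qed
    qed
    show "\<exists>V. openin ?X V \<and> x \<in> V \<and> finite {i \<in> UNIV. U i \<inter> V \<noteq> {}}" if "x \<in> topspace ?X" for x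
    proof (intro exI conjI)
      define V where "V = {x' \<in> B1. \<Theta> x' \<in> ball (\<Theta> x) 1}"
      have "open (\<Theta> -` ball (\<Theta> x) 1 \<inter> B1)"
        using \<Theta>c unfolding B1_def by (subst (asm) continuous_on_open_vimage) auto
      moreover have "\<Theta> -` ball (\<Theta> x) 1 \<inter> B1 = V" by (auto simp: V_def)
      moreover have "V \<subseteq> B1" by (auto simp: V_def)
      ultimately show "openin ?X V" unfolding B1_def by (subst openin_open_eq) auto
      show "x \<in> V" using that by (simp add: V_def)
      have "{i \<in> UNIV. U i \<inter> V \<noteq> {}} \<subseteq> e -` {c \<in> lattice. norm (c - \<Theta> x) < \<rho> + 1}"
      proof
        fix i assume "i \<in> {i \<in> UNIV. U i \<inter> V \<noteq> {}}"
        then obtain y where y: "y \<in> U i" "y \<in> V" by auto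
        have "norm (e i - \<Theta> y) < \<rho>" using y(1) by (simp add: U_def dist_norm)
        moreover have "norm (\<Theta> y - \<Theta> x) < 1" using y(2) by (simp add: V_def dist_norm norm_minus_commute)
        moreover have "norm (e i - \<Theta> x) \<le> norm (e i - \<Theta> y) + norm (\<Theta> y - \<Theta> x)"
          by (rule norm_diff_triangle_ineq[of "e i" "\<Theta> y" "\<Theta> y" "\<Theta> x", simplified])
        ultimately show "i \<in> e -` {c \<in> lattice. norm (c - \<Theta> x) < \<rho> + 1}" using eL by simp
      qed
      moreover have "finite (e -` {c \<in> lattice. norm (c - \<Theta> x) < \<rho> + 1})"
        by (rule finite_vimageI[OF lattice_finite_ball einj])
      ultimately show "finite {i \<in> UNIV. U i \<inter> V \<noteq> {}}" by (rule finite_subset)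
    qed
    show "\<exists>\<delta>>0. \<delta> < 1 \<and> topspace ?X \<subseteq> (\<Union>i\<in>UNIV. {x \<in> U i. \<phi> i x \<in> ball 0 (1 - \<delta>)})"
      by (rule exI[of _ "1/4"]) (use cover in auto)
    obtain L where L: "L > 0" "\<And>a. lip_gamma_on \<gamma> L (ball 0 1) (\<lambda>y. h (y + a))" using hL by blast
    show "\<exists>L>0. \<forall>i\<in>UNIV. \<forall>j\<in>UNIV. lip_gamma_on \<gamma> L B1 (\<phi> j \<circ> inv_into (U i) (\<phi> i))"
    proof (intro exI[of _ L] conjI ballI L(1))
      fix i j
      show "lip_gamma_on \<gamma> L B1 (\<phi> j \<circ> inv_into (U i) (\<phi> i))"
        unfolding B1_def
      proof (rule lip_cong[OF L(2)[of "(e i - e j) /\<^sub>R \<rho>"]])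
        fix y :: "real^'n" assume y: "y \<in> ball 0 1"
        then have yB: "y \<in> B1" by (simp add: B1_def)
        have inj: "inj_on (\<phi> i) (U i)" by (rule inj_on_inverseI[of _ "g i"]) (rule g\<phi>)
        have "inv_into (U i) (\<phi> i) y = g i y" by (rule inv_into_f_eq[OF inj gU[OF yB] \<phi>g[OF yB]])
        moreover have "(\<Theta> (g i y) - e j) /\<^sub>R \<rho> = y + (e i - e j) /\<^sub>R \<rho>"
          using \<rho>1 by (simp add: \<Theta>g algebra_simps)
        ultimately show "h (y + (e i - e j) /\<^sub>R \<rho>) = (\<phi> j \<circ> inv_into (U i) (\<phi> i)) y"
          by (simp add: \<phi>_def)
      qed
    qed
  qed
qed

end
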